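(* For every $N$ there exists a positive integer $n$ with at least $N$ distinct prime factors such that $\gamma(X_n)\le\gamma_t(X_n)\le g(n)-2$.
   Context: For a positive integer $n$, $X_n$ is the graph on $\{0,\dots,n-1\}$ with $a,b$ adjacent iff $\gcd(a-b,n)=1$. The Jacobsthal function $g(n)$ is the least positive integer $m$ such that every set of $m$ consecutive integers contains an integer coprime to $n$. $\gamma(G)$ is the domination number (minimum size of a set $S$ such that every vertex is in $S$ or adjacent to a vertex of $S$); $\gamma_t(G)$ is the total domination number (minimum size of a set $S$ such that every vertex of $G$ is adjacent to some vertex of $S$). *)

theory Defs
  imports "HOL-Number_Theory.Number_Theory"
begin

text \<open>The unitary Cayley graph X_n on vertex set {0,...,n-1}: a, b adjacent iff gcd(a-b, n) = 1.\<close>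
definition Xadj :: "nat \<Rightarrow> nat \<Rightarrow> nat \<Rightarrow> bool" where
  "Xadj n a b \<longleftrightarrow> gcd (int a - int b) (int n) = 1"

definition dominating_X :: "nat \<Rightarrow> nat set \<Rightarrow> bool" where
  "dominating_X n S \<longleftrightarrow> S \<subseteq> {0..<n} \<and>
     (\<forall>v\<in>{0..<n}. v \<in> S \<or> (\<exists>s\<in>S. Xadj n v s))"

definition total_dominating_X :: "nat \<Rightarrow> nat set \<Rightarrow> bool" where
  "total_dominating_X n S \<longleftrightarrow> S \<subseteq> {0..<n} \<and>
     (\<forall>v\<in>{0..<n}. \<exists>s\<in>S. Xadj n v s)"

definition domination_number_X :: "nat \<Rightarrow> nat" where
  "domination_number_X n = (LEAST k. \<exists>S. dominating_X n S \<and> card S = k)"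

definition total_domination_number_X :: "nat \<Rightarrow> nat" where
  "total_domination_number_X n = (LEAST k. \<exists>S. total_dominating_X n S \<and> card S = k)"

definition jacobsthal :: "nat \<Rightarrow> nat" where
  "jacobsthal n = (LEAST m. m > 0 \<and> (\<forall>a::int. \<exists>x\<in>{a..<a + int m}. coprime x (int n)))"

end

theory Submission imports Defs begin

definition RR :: "nat set" where
  "RR = set [0,1,4,7,8,10,12,15,21,22,23,24,25,26,27,29]"

lemma c1l: "list_all (\<lambda>v. 4 \<le> card (Set.filter (\<lambda>r. coprime (int v - int r) (30::int)) (set [0,1,4,7,8,10,12,15,21,22,23,24,25,26,27,29]))) [0..<30]"
  by code_simp
lemma c1: "\<forall>v<(30::nat). 4 \<le> card (Set.filter (\<lambda>r. coprime (int v - int r) (30::int)) (set [0,1,4,7,8,10,12,15,21,22,23,24,25,26,27,29]))"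
  using c1l unfolding list_all_iff by simp

lemma c2: "card (Set.filter (\<lambda>y. coprime (int y) (30::int)) (set [0..<30])) = 8"
  by code_simp

lemma c3: "card (Set.filter (\<lambda>x. coprime (20 + int x) (30::int)) (set [0..<17])) = 3"
  by code_simp

lemma RR_card: "card RR = 16" unfolding RR_def by code_simp

lemma RR_bound: "r \<in> RR \<Longrightarrow> r < 30" unfolding RR_def by auto

lemma RR_good: "4 \<le> card {r \<in> RR. coprime (w - int r) (30::int)}"
proof -
  define v where "v = nat (w mod 30)"
  have v: "v < 30" "int v = w mod 30" unfolding v_def by auto
  have "coprime (w - int r) 30 = coprime (int v - int r) (30::int)" for r
  proof -
    have "(w - int r) mod 30 = (int v - int r) mod 30" using v by (simp add: mod_diff_left_eq)
    then show ?thesis using coprime_mod_left_iff[of 30 "w - int r"] coprime_mod_left_iff[of 30 "int v - int r"]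
      by simp
  qed
  then have "{r \<in> RR. coprime (w - int r) (30::int)} = Set.filter (\<lambda>r. coprime (int v - int r) (30::int)) (set [0,1,4,7,8,10,12,15,21,22,23,24,25,26,27,29])"
    unfolding RR_def by auto
  then show ?thesis using c1 v(1) by (simp only:)
qed

lemma period1: "card {x \<in> {0..<30::nat}. coprime (b + int x) (30::int)} = 8"
proof -
  define h where "h x = nat ((b + int x) mod 30)" for x
  have inj: "inj_on h {0..<30}"
  proof
    fix x y assume xy: "x \<in> {0..<30}" "y \<in> {0..<30}" "h x = h y"
    then have "(b + int x) mod 30 = (b + int y) mod 30" unfolding h_def by simp
    then have "[b + int x = b + int y] (mod 30)" by (simp add: cong_def)
    then have "[int x = int y] (mod 30)" using cong_add_lcancel by blast
    then have "int x mod 30 = int y mod 30" by (simp add: cong_def)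
    then show "x = y" using xy by simp
  qed
  have cop: "coprime (b + int x) 30 \<longleftrightarrow> coprime (int (h x)) (30::int)" for x
    unfolding h_def using coprime_mod_left_iff[of 30 "b + int x"] by simp
  have img: "h ` {0..<30} = {0..<30}"
  proof -
    have "h ` {0..<30} \<subseteq> {0..<30}" unfolding h_def by (auto simp: nat_less_iff)
    moreover have "card (h ` {0..<30}) = card {0..<(30::nat)}" using card_image[OF inj] by simp
    ultimately show ?thesis by (simp add: card_subset_eq)
  qed
  have himg: "h ` {x \<in> {0..<30::nat}. coprime (b + int x) (30::int)} = {y \<in> {0..<30}. coprime (int y) (30::int)}"
  proof (rule equalityI; rule subsetI)
    fix y assume "y \<in> h ` {x \<in> {0..<30::nat}. coprime (b + int x) (30::int)}"
    then show "y \<in> {y \<in> {0..<30}. coprime (int y) (30::int)}" using img cop by auto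
  next
    fix y assume y: "y \<in> {y \<in> {0..<30}. coprime (int y) (30::int)}"
    then obtain x where "x \<in> {0..<30}" "y = h x" using img by (metis (no_types, lifting) imageE mem_Collect_eq)
    then show "y \<in> h ` {x \<in> {0..<30::nat}. coprime (b + int x) (30::int)}" using y cop by auto
  qed
  have hcard: "card (h ` {x \<in> {0..<30::nat}. coprime (b + int x) (30::int)}) = card {x \<in> {0..<30::nat}. coprime (b + int x) (30::int)}"
    by (rule card_image) (rule inj_on_subset[OF inj], auto)
  have hset: "{y \<in> {0..<30::nat}. coprime (int y) (30::int)} = Set.filter (\<lambda>y. coprime (int y) (30::int)) (set [0..<30])"
    by (simp only: set_upt Set.filter_eq)
  have "card {x \<in> {0..<30::nat}. coprime (b + int x) (30::int)} = card (h ` {x \<in> {0..<30::nat}. coprime (b + int x) (30::int)})"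
    using hcard by simp
  also have "\<dots> = card {y \<in> {0..<30::nat}. coprime (int y) (30::int)}" using himg by simp
  also have "\<dots> = card (Set.filter (\<lambda>y. coprime (int y) (30::int)) (set [0..<30]))" using hset by (rule arg_cong)
  also have "\<dots> = 8" by (rule c2)
  finally show ?thesis .
qed

lemma periods: "card {x \<in> {0..<30*c::nat}. coprime (b + int x) (30::int)} = 8*c"
proof (induction c arbitrary: b)
  case 0 then show ?case by simp
next
  case (Suc c)
  define A where "A = {x \<in> {0..<30::nat}. coprime (b + int x) (30::int)}"
  define C where "C = {x \<in> {0..<30*c}. coprime ((b+30) + int x) (30::int)}"
  have split: "{x \<in> {0..<30*Suc c}. coprime (b + int x) (30::int)} = A \<union> (\<lambda>x. x + 30) ` C"
  proof (rule equalityI; rule subsetI)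
    fix x assume x: "x \<in> {x \<in> {0..<30*Suc c}. coprime (b + int x) (30::int)}"
    show "x \<in> A \<union> (\<lambda>x. x + 30) ` C"
    proof (cases "x < 30")
      case True then have "x \<in> A" using x unfolding A_def by simp
      then show ?thesis by blast
    next
      case False
      have e: "(b+30) + int (x-30) = b + int x" using False by simp
      have "x < 30 * c + 30" using x by simp
      then have "x - 30 < 30 * c" using False by linarith
      moreover have cxx: "coprime (b + int x) (30::int)" using x by simp
      then have "coprime ((b+30) + int (x-30)) (30::int)" by (simp only: e)
      ultimately have "x - 30 \<in> C" unfolding C_def by simp
      moreover have "x = (x - 30) + 30" using False by simp
      ultimately show ?thesis by blast
    qed
  next
    fix x assume "x \<in> A \<union> (\<lambda>x. x + 30) ` C"
    then show "x \<in> {x \<in> {0..<30*Suc c}. coprime (b + int x) (30::int)}"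
    proof
      assume "x \<in> A" then show ?thesis unfolding A_def by simp
    next
      assume "x \<in> (\<lambda>x. x + 30) ` C"
      then obtain y where y: "y \<in> C" "x = y + 30" by blast
      have c1': "coprime ((b+30) + int y) (30::int)" using y(1) unfolding C_def by simp
      have e: "b + int x = (b+30) + int y" using y(2) by simp
      have cx: "coprime (b + int x) (30::int)" using c1' by (simp only: e)
      have "x < 30 * Suc c" using y unfolding C_def by simp
      then show ?thesis using cx by simp
    qed
  qed
  have fin: "finite A" "finite C" unfolding A_def C_def by auto
  have disj: "A \<inter> (\<lambda>x. x + 30) ` C = {}" unfolding A_def by auto
  have "card (A \<union> (\<lambda>x. x + 30) ` C) = card A + card ((\<lambda>x. x + 30) ` C)"
    using fin disj by (simp add: card_Un_disjoint)
  also have "card ((\<lambda>x. x + 30) ` C) = card C"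
    by (rule card_image) (auto simp: inj_on_def)
  also have "card C = 8 * c" unfolding C_def by (rule Suc.IH)
  also have "card A = 8" unfolding A_def by (rule period1)
  finally have "card (A \<union> (\<lambda>x. x + 30) ` C) = 8 + 8 * c" .
  then show ?case unfolding split by simp
qed


lemma cop_n:
  fixes Q :: "nat set"
  assumes fin: "finite Q" and pr: "\<And>q. q \<in> Q \<Longrightarrow> prime q"
  shows "\<And>x::int. coprime x 30 \<Longrightarrow> (\<forall>q\<in>Q. \<not> int q dvd x) \<Longrightarrow> coprime x (int (30 * \<Prod>Q))"
    and "\<And>x::int. coprime x (int (30 * \<Prod>Q)) \<Longrightarrow> coprime x 30"
    and "\<And>x::int. \<And>q. q \<in> Q \<Longrightarrow> int q dvd x \<Longrightarrow> \<not> coprime x (int (30 * \<Prod>Q))"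
proof -
  have intn: "int (30 * \<Prod>Q) = 30 * (\<Prod>q\<in>Q. int q)" by (simp add: of_nat_prod)
  show "coprime x (int (30 * \<Prod>Q))" if "coprime x 30" "\<forall>q\<in>Q. \<not> int q dvd x" for x :: int
  proof -
    have "coprime x (\<Prod>q\<in>Q. int q)"
    proof (rule prod_coprime_right)
      fix q assume q: "q \<in> Q"
      have "prime (int q)" using pr[OF q] by simp
      then have "coprime (int q) x" using that(2) q by (intro prime_imp_coprime) auto
      then show "coprime x (int q)" by (simp add: coprime_commute)
    qed
    then show ?thesis unfolding intn using that(1) by simp
  qed
  show "coprime x 30" if "coprime x (int (30 * \<Prod>Q))" for x :: int
    using that unfolding intn by simp
  show "\<not> coprime x (int (30 * \<Prod>Q))" if "q \<in> Q" "int q dvd x" for x :: int and q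
  proof
    assume cp: "coprime x (int (30 * \<Prod>Q))"
    have "q dvd \<Prod>Q" using fin that(1) by (intro dvd_prod_eqI) auto
    then have "q dvd 30 * \<Prod>Q" by simp
    then have "int q dvd int (30 * \<Prod>Q)" by (simp only: of_nat_dvd_iff)
    then have "is_unit (int q)" using coprime_common_divisor[OF cp that(2)] by simp
    then have "q = 1" by simp
    then show False using pr[OF that(1)] by simp
  qed
qed

theorem corollary3p2:
  fixes N :: nat
  shows "\<exists>n::nat. n > 0 \<and> card (prime_factors n) \<ge> N \<and>
           domination_number_X n \<le> total_domination_number_X n \<and>
           int (total_domination_number_X n) \<le> int (jacobsthal n) - 2"
proof -
  define c where "c = N"
  define k where "k = 8*c+3"
  define B where "B = 30*c + 30"
  have inf: "infinite {p::nat. prime p \<and> B < p}"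
    unfolding infinite_nat_iff_unbounded
  proof
    fix m
    obtain p where "prime p" "max m B < p" using bigger_prime by blast
    then show "\<exists>n>m. n \<in> {p. prime p \<and> B < p}" by auto
  qed
  obtain Q where Q: "finite Q" "card Q = k" "Q \<subseteq> {p. prime p \<and> B < p}"
    using infinite_arbitrarily_large[OF inf] by blast
  have Qp: "\<And>q. q \<in> Q \<Longrightarrow> prime q" and QB: "\<And>q. q \<in> Q \<Longrightarrow> B < q" using Q(3) by auto
  define n where "n = 30 * \<Prod>Q"
  have Qpos: "\<Prod>Q > 0" using Q(1) Qp by (simp add: prime_gt_0_nat prod_pos)
  have npos: "n > 0" unfolding n_def using Qpos by simp
  have Qne: "Q \<noteq> {}" using Q(2) unfolding k_def by auto
  then obtain q0 where q0: "q0 \<in> Q" by blast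
  have "q0 dvd \<Prod>Q" using Q(1) q0 by (intro dvd_prod_eqI) auto
  then have "q0 \<le> \<Prod>Q" using Qpos by (simp add: dvd_imp_le)
  then have nbig: "n > B" using QB[OF q0] unfolding n_def by linarith
  have copI: "\<And>x::int. coprime x 30 \<Longrightarrow> (\<forall>q\<in>Q. \<not> int q dvd x) \<Longrightarrow> coprime x (int n)"
    and copD1: "\<And>x::int. coprime x (int n) \<Longrightarrow> coprime x 30"
    and copD2: "\<And>x::int. \<And>q. q \<in> Q \<Longrightarrow> int q dvd x \<Longrightarrow> \<not> coprime x (int n)"
    using cop_n[OF Q(1) Qp] unfolding n_def by blast+

  have pf: "N \<le> card (prime_factors n)"
  proof -
    have "Q \<subseteq> prime_factors n"
    proof
      fix q assume q: "q \<in> Q"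
      have "q dvd \<Prod>Q" using Q(1) q by (intro dvd_prod_eqI) auto
      then have "q dvd n" unfolding n_def by simp
      then show "q \<in> prime_factors n" using npos Qp[OF q] by (intro prime_factorsI) auto
    qed
    then have "card Q \<le> card (prime_factors n)" by (intro card_mono) auto
    then show ?thesis using Q(2) unfolding k_def c_def by simp
  qed

  define S where "S = {0..<30*c} \<union> (\<lambda>r. 30*c + r) ` RR"
  have Ssub: "S \<subseteq> {0..<B}" unfolding S_def B_def using RR_bound by auto
  have finS: "finite S" unfolding S_def unfolding RR_def by simp
  have cardS: "card S = 30*c + 16"
  proof -
    have "card S = card {0..<30*c} + card ((\<lambda>r. 30*c + r) ` RR)"
      unfolding S_def by (rule card_Un_disjoint) (auto simp: RR_def)
    also have "card ((\<lambda>r. 30*c + r) ` RR) = card RR" by (rule card_image) (auto simp: inj_on_def)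
    finally show ?thesis using RR_card by simp
  qed
  have uniq: "s = s'" if "s \<in> S" "s' \<in> S" "q \<in> Q" "int q dvd (int v - int s)" "int q dvd (int v - int s')" for s s' q v
  proof (rule ccontr)
    assume ne: "s \<noteq> s'"
    have "int q dvd (int v - int s) - (int v - int s')" using that(4,5) by (rule dvd_diff)
    then have d: "int q dvd (int s' - int s)" by simp
    have "int s' - int s \<noteq> 0" using ne by simp
    then have "\<bar>int q\<bar> \<le> \<bar>int s' - int s\<bar>" using d by (rule dvd_imp_le_int)
    moreover have "s < B" "s' < B" using that(1,2) Ssub by auto
    ultimately show False using QB[OF that(3)] by linarith
  qed
  have tdom: "total_dominating_X n S"
    unfolding total_dominating_X_def
  proof (intro conjI ballI)
    show "S \<subseteq> {0..<n}" using Ssub nbig by auto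
  next
    fix v assume v: "v \<in> {0..<n}"
    define Cand where "Cand = {s \<in> S. coprime (int v - int s) (30::int)}"
    define A1 where "A1 = {s \<in> {0..<30*c}. coprime (- int v + int s) (30::int)}"
    define A2 where "A2 = (\<lambda>r. 30*c + r) ` {r \<in> RR. coprime ((int v - int (30*c)) - int r) (30::int)}"
    have cA1: "card A1 = 8*c" unfolding A1_def by (rule periods)
    have cA2: "card A2 \<ge> 4"
    proof -
      have "card A2 = card {r \<in> RR. coprime ((int v - int (30*c)) - int r) (30::int)}"
        unfolding A2_def by (rule card_image) (auto simp: inj_on_def)
      then show ?thesis using RR_good by simp
    qed
    have A1C: "A1 \<subseteq> Cand"
    proof
      fix s assume "s \<in> A1"
      then have s: "s < 30*c" "coprime (- int v + int s) (30::int)" unfolding A1_def by auto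
      have "- int v + int s = - (int v - int s)" by simp
      then have "coprime (int v - int s) (30::int)" using s(2) by (metis coprime_minus_left_iff)
      then show "s \<in> Cand" unfolding Cand_def S_def using s(1) by auto
    qed
    have A2C: "A2 \<subseteq> Cand"
    proof
      fix s assume "s \<in> A2"
      then obtain r where r: "r \<in> RR" "coprime ((int v - int (30*c)) - int r) (30::int)" "s = 30*c + r"
        unfolding A2_def by blast
      have e: "int v - int s = (int v - int (30*c)) - int r" using r(3) by simp
      have "coprime (int v - int s) (30::int)" using r(2) by (simp only: e)
      then show "s \<in> Cand" unfolding Cand_def S_def using r(1,3) by auto
    qed
    have dis: "A1 \<inter> A2 = {}" unfolding A1_def A2_def by auto
    have finC: "finite Cand" unfolding Cand_def using finS by simp
    have "card (A1 \<union> A2) = card A1 + card A2"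
      by (rule card_Un_disjoint) (use dis in \<open>auto simp: A1_def A2_def RR_def\<close>)
    moreover have "card (A1 \<union> A2) \<le> card Cand" using A1C A2C finC by (intro card_mono) auto
    ultimately have cC: "card Cand \<ge> 8*c + 4" using cA1 cA2 by linarith
    define f where "f q = (SOME s. s \<in> S \<and> int q dvd (int v - int s))" for q
    define K where "K = {s \<in> Cand. \<exists>q\<in>Q. int q dvd (int v - int s)}"
    have KQ: "K \<subseteq> f ` Q"
    proof
      fix s assume "s \<in> K"
      then obtain q where q: "q \<in> Q" "s \<in> S" "int q dvd (int v - int s)" unfolding K_def Cand_def by blast
      then have "f q \<in> S \<and> int q dvd (int v - int (f q))" unfolding f_def by (metis (mono_tags, lifting) someI)
      then have "f q = s" using uniq[of "f q" s q v] q by blast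
      then show "s \<in> f ` Q" using q by blast
    qed
    have "card K \<le> card Q" using KQ Q(1) by (meson card_image_le card_mono finite_imageI order_trans)
    then have "card K < card Cand" using cC Q(2) unfolding k_def by linarith
    moreover have finK: "finite K" using finC unfolding K_def by simp
    ultimately have "\<not> Cand \<subseteq> K"
      using card_mono[of K Cand] by linarith
    then obtain s where s: "s \<in> Cand" "s \<notin> K" by blast
    have s1: "coprime (int v - int s) (30::int)" using s(1) unfolding Cand_def by simp
    have s2: "\<forall>q\<in>Q. \<not> int q dvd (int v - int s)" using s unfolding K_def by blast
    have "coprime (int v - int s) (int n)" using copI[OF s1 s2] .
    then have "Xadj n v s" unfolding Xadj_def by (simp add: coprime_iff_gcd_eq_1)
    then show "\<exists>s\<in>S. Xadj n v s" using s(1) unfolding Cand_def by blast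
  qed

  define L where "L = 30*c + 17"
  define W where "W = {x \<in> {0..<L}. coprime (20 + int x) (30::int)}"
  have cardW: "card W = k"
  proof -
    define W1 where "W1 = {x \<in> {0..<17::nat}. coprime (20 + int x) (30::int)}"
    define W2 where "W2 = {x \<in> {0..<30*c}. coprime (37 + int x) (30::int)}"
    have "W = W1 \<union> (\<lambda>x. x + 17) ` W2"
    proof (rule equalityI; rule subsetI)
      fix x assume x: "x \<in> W"
      show "x \<in> W1 \<union> (\<lambda>x. x + 17) ` W2"
      proof (cases "x < 17")
        case True then show ?thesis using x unfolding W_def W1_def by auto
      next
        case False
        have "x - 17 \<in> W2" using x False unfolding W_def W2_def L_def
          by (auto simp: of_nat_diff algebra_simps)
        moreover have "x = (x - 17) + 17" using False by simp
        ultimately show ?thesis by blast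
      qed
    next
      fix x assume "x \<in> W1 \<union> (\<lambda>x. x + 17) ` W2"
      then show "x \<in> W" unfolding W_def W1_def W2_def L_def by (auto simp: algebra_simps)
    qed
    moreover have "card (W1 \<union> (\<lambda>x. x + 17) ` W2) = card W1 + card ((\<lambda>x. x + 17) ` W2)"
      by (rule card_Un_disjoint) (auto simp: W1_def W2_def)
    moreover have "card ((\<lambda>x. x + 17) ` W2) = card W2" by (rule card_image) (auto simp: inj_on_def)
    moreover have "card W2 = 8 * c" unfolding W2_def by (rule periods)
    moreover have "card W1 = 3"
    proof -
      have "W1 = Set.filter (\<lambda>x. coprime (20 + int x) (30::int)) (set [0..<17])"
        unfolding W1_def by (simp only: set_upt Set.filter_eq)
      then show ?thesis using c3 by (simp only:)
    qed
    ultimately show ?thesis unfolding k_def by simp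
  qed
  have finW: "finite W" unfolding W_def by simp
  obtain h where h: "bij_betw h Q W" using finite_same_card_bij[OF Q(1) finW] Q(2) cardW by auto
  define u where "u i = (if i = 30 then 20 else i - h i mod i)" for i
  have "\<exists>a. \<forall>i \<in> insert 30 Q. [a = u i] (mod id i)"
  proof (rule chinese_remainder_nat)
    show "finite (insert 30 Q)" using Q(1) by simp
    show "\<forall>i\<in>insert 30 Q. \<forall>j\<in>insert 30 Q. i \<noteq> j \<longrightarrow> coprime (id i) (id j)"
    proof (intro ballI impI)
      fix i j assume ij: "i \<in> insert 30 Q" "j \<in> insert 30 Q" "i \<noteq> j"
      have c30: "coprime q 30" if "q \<in> Q" for q
      proof -
        have "\<not> q dvd 30" using QB[OF that] unfolding B_def by (auto dest: dvd_imp_le)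
        then show ?thesis by (rule prime_imp_coprime[OF Qp[OF that]])
      qed
      have "coprime i j"
      proof (cases "i = 30")
        case True then show ?thesis using ij c30 by (auto simp: coprime_commute)
      next
        case False
        then have i: "i \<in> Q" using ij by simp
        show ?thesis
        proof (cases "j = 30")
          case True then show ?thesis using i c30 by simp
        next
          case False
          then have "j \<in> Q" using ij by simp
          then show ?thesis using primes_coprime[OF Qp[OF i] Qp[of j]] ij(3) by simp
        qed
      qed
      then show "coprime (id i) (id j)" by simp
    qed
  qed
  then obtain a where a: "\<forall>i \<in> insert 30 Q. [a = u i] (mod id i)" by blast
  have a30: "int a mod 30 = 20"
  proof -
    have "[a = 20] (mod 30)" using a unfolding u_def by auto
    then have "a mod 30 = 20" by (simp add: cong_def)
    then show ?thesis by (metis of_nat_mod of_nat_numeral)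
  qed
  have aq: "q dvd a + h q" if q: "q \<in> Q" for q
  proof -
    have q30: "q \<noteq> 30" using QB[OF q] unfolding B_def by simp
    have qpos: "q > 0" using Qp[OF q] by (simp add: prime_gt_0_nat)
    have c: "[a = q - h q mod q] (mod q)" using a q q30 unfolding u_def by auto
    have c2: "[a + h q = (q - h q mod q) + h q] (mod q)" by (rule cong_add[OF c cong_refl])
    have m: "h q mod q < q" "h q mod q \<le> h q" using qpos by simp_all
    have "(q - h q mod q) + h q = q + (h q - h q mod q)" using m by linarith
    moreover have "q dvd q + (h q - h q mod q)" by (intro dvd_add dvd_refl dvd_minus_mod)
    ultimately have "q dvd (q - h q mod q) + h q" by simp
    then show ?thesis using cong_dvd_iff[OF c2] by simp
  qed
  have window: "\<not> coprime (int a + int x) (int n)" if x: "x < L" for x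
  proof (cases "coprime (20 + int x) (30::int)")
    case True
    then have "x \<in> W" unfolding W_def using x by simp
    then obtain q where q: "q \<in> Q" "h q = x" using h unfolding bij_betw_def by blast
    have "q dvd a + x" using aq[OF q(1)] q(2) by simp
    then have "int q dvd int a + int x" by (metis of_nat_add of_nat_dvd_iff)
    then show ?thesis using copD2 q(1) by blast
  next
    case False
    have "(int a + int x) mod 30 = (20 + int x) mod 30" using a30 by (metis mod_add_left_eq)
    then have "\<not> coprime (int a + int x) (30::int)"
      using False coprime_mod_left_iff[of 30 "int a + int x"] coprime_mod_left_iff[of 30 "20 + int x"] by simp
    then show ?thesis using copD1 by blast
  qed
  define P where "P m = (m > 0 \<and> (\<forall>a::int. \<exists>x\<in>{a..<a + int m}. coprime x (int n)))" for m
  have jdef: "jacobsthal n = (LEAST m. P m)" unfolding jacobsthal_def P_def by simp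
  have Pn: "P n"
    unfolding P_def
  proof (intro conjI allI)
    show "n > 0" by (rule npos)
    fix b :: int
    define x where "x = b + (1 - b) mod int n"
    have n1: "int n > 1" using nbig unfolding B_def by simp
    have "x \<in> {b..<b + int n}" unfolding x_def using n1 by simp
    moreover have "x mod int n = 1"
    proof -
      have "x mod int n = (b + (1 - b)) mod int n" unfolding x_def by (simp add: mod_add_right_eq)
      then show ?thesis using n1 by simp
    qed
    then have "coprime x (int n)" using coprime_mod_left_iff[of "int n" x] n1 by simp
    ultimately show "\<exists>x\<in>{b..<b + int n}. coprime x (int n)" by blast
  qed
  have PJ: "P (jacobsthal n)" unfolding jdef using Pn by (rule LeastI)
  have Jbig: "jacobsthal n \<ge> L + 1"
  proof (rule ccontr)
    assume "\<not> jacobsthal n \<ge> L + 1"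
    then have JL: "jacobsthal n \<le> L" by simp
    from PJ obtain y where y: "y \<in> {int a..<int a + int (jacobsthal n)}" "coprime y (int n)"
      unfolding P_def by blast
    define x where "x = nat (y - int a)"
    have "y = int a + int x" "x < L" using y JL unfolding x_def by auto
    then show False using window y(2) by blast
  qed

  have tot: "total_domination_number_X n \<le> 30*c + 16"
    unfolding total_domination_number_X_def by (rule Least_le) (use tdom cardS in blast)
  have "\<exists>S. total_dominating_X n S \<and> card S = total_domination_number_X n"
    unfolding total_domination_number_X_def by (rule LeastI_ex) (use tdom in blast)
  then obtain S0 where S0: "total_dominating_X n S0" "card S0 = total_domination_number_X n" by blast
  have "dominating_X n S0" using S0(1) unfolding total_dominating_X_def dominating_X_def by blast
  then have dom: "domination_number_X n \<le> total_domination_number_X n"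
    unfolding domination_number_X_def using S0(2) by (intro Least_le) blast
  show ?thesis
    using npos pf dom tot Jbig unfolding L_def by (intro exI[of _ n]) auto
qed

end
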